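(* Let $G$ be a locally compact, compactly generated group and let $N$ be a compact normal subgroup of $G$. Then $\alpha^*_2(G/N)=\alpha^*_2(G)$, where $G/N$ carries the length $\overline{a}\mapsto\inf_{g\in\overline{a}} l(g)$ induced from the word length $l$ of $G$ relative to a compact generating subset.
   Context: For a locally compact compactly generated group $H$ with word length metric $d$ relative to a compact generating subset, $\alpha^*_2(H)$ denotes its equivariant Hilbert space compression: the supremum of $r\in[0,1]$ such that there exist a continuous affine isometric action of $H$ on a Hilbert space with associated $1$-cocycle $b$ (i.e. $b(h)$ is the image of $0$ under $h$) and constants $C,D>0$ with $\frac1C d(g,h)^r-D\leq\|b(g)-b(h)\|\leq C d(g,h)$ for all $g,h\in H$. *)

theory Defs
  imports "HOL-Analysis.Analysis"
begin

text \<open>Groups are written additively (class group_add, not assumed commutative):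
  the group law is +, the identity is 0, inverses are given by uminus.\<close>

definition words :: "'a::group_add set \<Rightarrow> nat \<Rightarrow> 'a set" where
  "words S n = {sum_list xs | xs. length xs \<le> n \<and> set xs \<subseteq> S \<union> uminus ` S}"

definition generating_set :: "'a::group_add set \<Rightarrow> bool" where
  "generating_set S \<longleftrightarrow> (\<forall>g. \<exists>n. g \<in> words S n)"

definition word_length :: "'a::group_add set \<Rightarrow> 'a \<Rightarrow> real" where
  "word_length S g = real (LEAST n. g \<in> words S n)"

definition word_metric :: "'a::group_add set \<Rightarrow> 'a \<Rightarrow> 'a \<Rightarrow> real" where
  "word_metric S g h = word_length S (- g + h)"

definition affine_isometric_action ::
  "('g::{topological_space, group_add} \<Rightarrow> 'v::{real_inner, complete_space} \<Rightarrow> 'v) \<Rightarrow> bool" where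
  "affine_isometric_action A \<longleftrightarrow>
     (\<forall>g h. A (g + h) = A g \<circ> A h) \<and> A 0 = id \<and>
     (\<forall>g x y. dist (A g x) (A g y) = dist x y) \<and>
     (\<forall>x. continuous_on UNIV (\<lambda>g. A g x))"

text \<open>Equivariant Hilbert space compression of a group with metric d, computed with
  affine isometric actions on the Hilbert space type 'v; the cocycle is b(g) = A g 0.\<close>
definition equivariant_compression ::
  "('g::{topological_space, group_add} \<Rightarrow> 'g \<Rightarrow> real) \<Rightarrow> 'v::{real_inner, complete_space} itself \<Rightarrow> real" where
  "equivariant_compression d (_::'v itself) =
     Sup {r \<in> {0..1}. \<exists>A :: 'g \<Rightarrow> 'v \<Rightarrow> 'v. affine_isometric_action A \<and>
            (\<exists>C>0. \<exists>D>0. \<forall>g h.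
               d g h powr r / C - D \<le> norm (A g 0 - A h 0) \<and>
               norm (A g 0 - A h 0) \<le> C * d g h)}"

text \<open>Quotient length on G/N induced by the length l of G: inf of l over the coset,
  the quotient G/N being presented by the quotient map q.\<close>
definition quotient_metric ::
  "('g \<Rightarrow> real) \<Rightarrow> ('g \<Rightarrow> 'h::group_add) \<Rightarrow> 'h \<Rightarrow> 'h \<Rightarrow> real" where
  "quotient_metric l q x y = Inf {l g | g. q g = - x + y}"

end

theory Submission
  imports Defs
begin

lemma words_mono: "m \<le> n \<Longrightarrow> words S m \<subseteq> words S n"
  unfolding words_def by auto

lemma words_add: "a \<in> words S m \<Longrightarrow> b \<in> words S n \<Longrightarrow> a + b \<in> words S (m + n)"
  unfolding words_def
proof clarify
  fix xs ys assume "length xs \<le> m" "set xs \<subseteq> S \<union> uminus ` S" "length ys \<le> n" "set ys \<subseteq> S \<union> uminus ` S"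
  then show "\<exists>zs. sum_list xs + sum_list ys = sum_list zs \<and> length zs \<le> m + n \<and> set zs \<subseteq> S \<union> uminus ` S"
    by (intro exI[of _ "xs @ ys"]) auto
qed

lemma sum_list_rev_neg: "sum_list (rev (map uminus xs)) = - sum_list (xs :: 'a::group_add list)"
  by (induction xs) (auto simp: minus_add)

lemma words_neg: "a \<in> words S m \<Longrightarrow> - a \<in> words S m"
  unfolding words_def
proof clarify
  fix xs assume "length xs \<le> m" "set xs \<subseteq> S \<union> uminus ` S"
  then show "\<exists>zs. - sum_list xs = sum_list zs \<and> length zs \<le> m \<and> set zs \<subseteq> S \<union> uminus ` S"
    by (intro exI[of _ "rev (map uminus xs)"]) (auto simp: sum_list_rev_neg)
qed

lemma words_0: "words S 0 = {0}"
  unfolding words_def by auto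

lemma words_Suc: "words S (Suc m) = insert 0 ((\<lambda>p. fst p + snd p) ` ((S \<union> uminus ` S) \<times> words S m))"
proof
  show "words S (Suc m) \<subseteq> insert 0 ((\<lambda>p. fst p + snd p) ` ((S \<union> uminus ` S) \<times> words S m))"
  proof
    fix g assume "g \<in> words S (Suc m)"
    then obtain xs where xs: "g = sum_list xs" "length xs \<le> Suc m" "set xs \<subseteq> S \<union> uminus ` S"
      unfolding words_def by auto
    show "g \<in> insert 0 ((\<lambda>p. fst p + snd p) ` ((S \<union> uminus ` S) \<times> words S m))"
    proof (cases xs)
      case Nil then show ?thesis using xs by simp
    next
      case (Cons y ys)
      then have "sum_list ys \<in> words S m" using xs unfolding words_def by auto
      then show ?thesis using xs Cons by (auto intro!: image_eqI[of _ _ "(y, sum_list ys)"])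
    qed
  qed
  show "insert 0 ((\<lambda>p. fst p + snd p) ` ((S \<union> uminus ` S) \<times> words S m)) \<subseteq> words S (Suc m)"
  proof
    fix g assume "g \<in> insert 0 ((\<lambda>p. fst p + snd p) ` ((S \<union> uminus ` S) \<times> words S m))"
    then consider "g = 0" | y h where "g = y + h" "y \<in> S \<union> uminus ` S" "h \<in> words S m" by auto
    then show "g \<in> words S (Suc m)"
    proof cases
      case 1 then show ?thesis unfolding words_def by (auto intro!: exI[of _ "[]"])
    next
      case 2
      have "y \<in> words S 1" using 2 unfolding words_def by (auto intro!: exI[of _ "[y]"])
      from words_add[OF this 2(3)] show ?thesis using 2 by simp
    qed
  qed
qed

lemma compact_words:
  fixes S :: "'a::{topological_group_add} set"
  assumes "compact S" shows "compact (words S m)"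
proof (induction m)
  case 0 then show ?case by (simp add: words_0)
next
  case (Suc m)
  have "compact (uminus ` S)"
    by (rule compact_continuous_image[OF _ assms]) (intro continuous_intros)
  then have "compact ((S \<union> uminus ` S) \<times> words S m)"
    using assms Suc by (intro compact_Times compact_Un) auto
  then have "compact ((\<lambda>p. fst p + snd p) ` ((S \<union> uminus ` S) \<times> words S m))"
    by (rule compact_continuous_image[rotated]) (intro continuous_intros)
  then show ?case by (simp add: words_Suc)
qed

definition wl :: "'a::group_add set \<Rightarrow> 'a \<Rightarrow> nat" where
  "wl S g = (LEAST n. g \<in> words S n)"

lemma word_length_wl: "word_length S g = real (wl S g)"
  by (simp add: word_length_def wl_def)

lemma wl_in: "generating_set S \<Longrightarrow> g \<in> words S (wl S g)"
  unfolding generating_set_def wl_def by (metis LeastI)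

lemma wl_le: "g \<in> words S n \<Longrightarrow> wl S g \<le> n"
  unfolding wl_def by (rule Least_le)

lemma wl_add: "generating_set S \<Longrightarrow> wl S (a + b) \<le> wl S a + wl S b"
  by (intro wl_le words_add wl_in)

lemma wl_neg: "generating_set S \<Longrightarrow> wl S (- a) \<le> wl S a"
  by (intro wl_le words_neg wl_in)

lemma wl_zero_iff: "generating_set S \<Longrightarrow> wl S a = 0 \<longleftrightarrow> a = 0"
  using wl_in[of S a] wl_le[of 0 S 0] by (auto simp: words_0)

lemma wl_bounded_compact:
  fixes S N :: "'g::{topological_group_add, t2_space} set"
  assumes lc: "locally_compact_space (euclidean :: 'g topology)"
    and S: "compact S" "generating_set S" and N: "compact N"
  shows "\<exists>K. \<forall>n\<in>N. wl S n \<le> K"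
proof -
  have H: "Hausdorff_space (euclidean :: 'g topology)"
    unfolding Hausdorff_space_def disjnt_def using hausdorff by fastforce
  have reg: "regular_space (euclidean :: 'g topology)"
    using locally_compact_Hausdorff_imp_regular_space[OF lc H] .
  have "\<exists>m. interior (words S m) \<noteq> {}"
  proof (rule ccontr)
    assume "\<not> ?thesis"
    then have "euclidean interior_of \<Union>(range (words S)) = {}"
      using lc reg
      by (intro Baire_category_alt) (auto intro: compact_imp_closed compact_words S)
    moreover have "\<Union>(range (words S)) = UNIV"
      using wl_in[OF S(2)] by blast
    ultimately show False by simp
  qed
  then obtain m u where u: "u \<in> interior (words S m)" by blast
  define U where "U = interior (words S m)"
  have oU: "open U" by (simp add: U_def)
  have UW: "U \<subseteq> words S m" by (simp add: U_def interior_subset)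
  define f where "f g = (\<lambda>y. u + (- g + y)) -` U" for g
  have of: "open (f g)" for g
    unfolding f_def by (rule open_vimage[OF oU]) (intro continuous_intros)
  have "N \<subseteq> (\<Union>g\<in>N. f g)"
    using u by (auto simp: f_def U_def)
  then obtain F where F: "F \<subseteq> N" "finite F" "N \<subseteq> (\<Union>g\<in>F. f g)"
    using compactE_image[OF N, of N f] of by metis
  show ?thesis
  proof (intro exI ballI)
    fix n assume "n \<in> N"
    then obtain g where g: "g \<in> F" "n \<in> f g" using F by blast
    then have x: "u + (- g + n) \<in> words S m" using UW by (auto simp: f_def)
    have "-u \<in> words S m" using u UW by (auto simp: U_def intro: words_neg)
    from words_add[OF this x] have "-u + (u + (- g + n)) \<in> words S (m + m)" .
    then have "- g + n \<in> words S (m + m)" by (simp only: minus_add_cancel)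
    from words_add[OF wl_in[OF S(2), of g] this] have "n \<in> words S (wl S g + (m + m))"
      by (simp add: add.assoc[symmetric])
    then have "wl S n \<le> wl S g + (m + m)" by (rule wl_le)
    also have "wl S g \<le> (\<Sum>h\<in>F. wl S h)" using F g by (intro member_le_sum) auto
    finally show "wl S n \<le> (\<Sum>h\<in>F. wl S h) + (m + m)" by simp
  qed
qed

lemma parallelogram_mid:
  fixes x y z :: "'v::real_inner"
  shows "(dist ((1/2) *\<^sub>R (x + y)) z)\<^sup>2 = (dist x z)\<^sup>2 / 2 + (dist y z)\<^sup>2 / 2 - (norm (x - y))\<^sup>2 / 4"
  unfolding dist_norm power2_norm_eq_inner
  by (simp add: inner_simps inner_commute algebra_simps) (simp add: field_simps)

lemma norm_add_orth:
  fixes a b :: "'v::real_inner"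
  assumes "inner a b = 0"
  shows "(norm (a + b))\<^sup>2 = (norm a)\<^sup>2 + (norm b)\<^sup>2"
  using assms unfolding power2_norm_eq_inner
  by (simp add: inner_simps inner_commute)

lemma affine_unique:
  fixes a b z :: "'v::real_inner"
  assumes "(norm (z - a))\<^sup>2 = t\<^sup>2 * (norm (a - b))\<^sup>2"
    and "(norm (z - b))\<^sup>2 = (1 - t)\<^sup>2 * (norm (a - b))\<^sup>2"
  shows "z = (1 - t) *\<^sub>R a + t *\<^sub>R b"
proof -
  define v where "v = z - a"
  define e where "e = b - a"
  have 1: "inner v v = t\<^sup>2 * inner e e"
    using assms(1) unfolding v_def e_def power2_norm_eq_inner
    by (simp add: inner_simps inner_commute algebra_simps)
  have "inner (v - e) (v - e) = (1 - t)\<^sup>2 * inner e e"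
    using assms(2) unfolding v_def e_def power2_norm_eq_inner
    by (simp add: inner_simps inner_commute algebra_simps)
  then have 2: "inner v v - 2 * inner v e + inner e e = (1 - t)\<^sup>2 * inner e e"
    by (simp add: inner_simps inner_commute algebra_simps)
  have 3: "inner v e = t * inner e e"
    using 1 2 by (simp add: power2_eq_square algebra_simps)
  have "inner (v - t *\<^sub>R e) (v - t *\<^sub>R e) = inner v v - 2 * t * inner v e + t\<^sup>2 * inner e e"
    by (simp add: inner_simps inner_commute algebra_simps power2_eq_square)
  also have "\<dots> = 0" using 1 3 by (simp add: power2_eq_square algebra_simps)
  finally have "v - t *\<^sub>R e = 0" by simp
  then show ?thesis unfolding v_def e_def by (simp add: algebra_simps)
qed

lemma isometry_affine:
  fixes T :: "'v::real_inner \<Rightarrow> 'v"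
  assumes iso: "\<And>x y. dist (T x) (T y) = dist x y"
  shows "T ((1 - t) *\<^sub>R u + t *\<^sub>R w) = (1 - t) *\<^sub>R T u + t *\<^sub>R T w"
proof (rule affine_unique)
  let ?p = "(1 - t) *\<^sub>R u + t *\<^sub>R w"
  have "norm (T ?p - T u) = norm (?p - u)" using iso by (simp add: dist_norm)
  also have "?p - u = t *\<^sub>R (w - u)" by (simp add: algebra_simps)
  finally have a: "norm (T ?p - T u) = \<bar>t\<bar> * norm (u - w)" by (simp add: norm_minus_commute)
  have "norm (T ?p - T w) = norm (?p - w)" using iso by (simp add: dist_norm)
  also have "?p - w = (1 - t) *\<^sub>R (u - w)" by (simp add: algebra_simps)
  finally have b: "norm (T ?p - T w) = \<bar>1 - t\<bar> * norm (u - w)" by simp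
  have c: "norm (T u - T w) = norm (u - w)" using iso by (simp add: dist_norm)
  show "(norm (T ?p - T u))\<^sup>2 = t\<^sup>2 * (norm (T u - T w))\<^sup>2"
    using a c by (simp add: power_mult_distrib)
  show "(norm (T ?p - T w))\<^sup>2 = (1 - t)\<^sup>2 * (norm (T u - T w))\<^sup>2"
    using b c by (simp add: power_mult_distrib)
qed

lemma min_exists:
  fixes f :: "'v::{real_inner, complete_space} \<Rightarrow> real" and K :: "'v set"
  assumes K: "closed K" "K \<noteq> {}" "\<And>x y. x \<in> K \<Longrightarrow> y \<in> K \<Longrightarrow> (1/2) *\<^sub>R (x + y) \<in> K"
    and nn: "\<And>x. f x \<ge> 0"
    and lip: "\<And>x y. f x \<le> f y + dist x y"
    and uc: "\<And>x y. x \<in> K \<Longrightarrow> y \<in> K \<Longrightarrow>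
        (f ((1/2) *\<^sub>R (x + y)))\<^sup>2 \<le> (f x)\<^sup>2 / 2 + (f y)\<^sup>2 / 2 - (norm (x - y))\<^sup>2 / 4"
  shows "\<exists>x\<in>K. \<forall>y\<in>K. f x \<le> f y"
proof -
  define R where "R = Inf (f ` K)"
  have bdd: "bdd_below (f ` K)" using nn by (auto simp: bdd_below_def)
  have R0: "R \<ge> 0" unfolding R_def using K(2) nn by (intro cInf_greatest) auto
  have Rle: "R \<le> f y" if "y \<in> K" for y
    unfolding R_def using that bdd by (intro cInf_lower) auto
  have "\<exists>x\<in>K. f x < R + 1 / (real n + 1)" for n
  proof -
    have "Inf (f ` K) < R + 1 / (real n + 1)" unfolding R_def by (simp add: add_pos_pos)
    then show ?thesis using cInf_less_iff[OF _ bdd] K(2) by auto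
  qed
  then obtain X where X: "\<And>n. X n \<in> K" "\<And>n. f (X n) < R + 1 / (real n + 1)" by metis
  have dX: "(norm (X m - X n))\<^sup>2 \<le> 4 * (2 * R + 1) * (1 / (real m + 1) + 1 / (real n + 1))" for m n
  proof -
    define a where "a = 1 / (real m + 1)"
    define b where "b = 1 / (real n + 1)"
    have a: "0 < a" "a \<le> 1" unfolding a_def by auto
    have b: "0 < b" "b \<le> 1" unfolding b_def by auto
    have "R \<le> f ((1/2) *\<^sub>R (X m + X n))" using K(3) X(1) Rle by blast
    then have "R\<^sup>2 \<le> (f ((1/2) *\<^sub>R (X m + X n)))\<^sup>2" using R0 by (intro power_mono) auto
    also have "\<dots> \<le> (f (X m))\<^sup>2 / 2 + (f (X n))\<^sup>2 / 2 - (norm (X m - X n))\<^sup>2 / 4"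
      using uc X(1) by blast
    finally have "(norm (X m - X n))\<^sup>2 \<le> 2 * (f (X m))\<^sup>2 + 2 * (f (X n))\<^sup>2 - 4 * R\<^sup>2" by simp
    moreover have "(f (X m))\<^sup>2 \<le> (R + a)\<^sup>2" using X(2)[of m] nn[of "X m"] unfolding a_def
      by (intro power_mono) auto
    moreover have "(f (X n))\<^sup>2 \<le> (R + b)\<^sup>2" using X(2)[of n] nn[of "X n"] unfolding b_def
      by (intro power_mono) auto
    moreover have "(R + a)\<^sup>2 \<le> R\<^sup>2 + (2 * R + 1) * a" using a R0
      by (simp add: power2_eq_square algebra_simps mult_left_le)
    moreover have "(R + b)\<^sup>2 \<le> R\<^sup>2 + (2 * R + 1) * b" using b R0
      by (simp add: power2_eq_square algebra_simps mult_left_le)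
    moreover have "(2 * R + 1) * a \<ge> 0" "(2 * R + 1) * b \<ge> 0" using R0 a b by auto
    ultimately have "(norm (X m - X n))\<^sup>2 \<le> 4 * ((2 * R + 1) * a) + 4 * ((2 * R + 1) * b)"
      by linarith
    also have "\<dots> = 4 * (2 * R + 1) * (a + b)" by (simp add: algebra_simps)
    finally show ?thesis unfolding a_def b_def .
  qed
  have "Cauchy X"
  proof (rule metric_CauchyI)
    fix e :: real assume e: "e > 0"
    define c where "c = 8 * (2 * R + 1)"
    have c: "c > 0" using R0 by (simp add: c_def)
    obtain M :: nat where M: "c / e\<^sup>2 < real M" using reals_Archimedean2 by blast
    show "\<exists>M. \<forall>m\<ge>M. \<forall>n\<ge>M. dist (X m) (X n) < e"
    proof (intro exI allI impI)
      fix m n assume mn: "M \<le> m" "M \<le> n"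
      have "1 / (real m + 1) \<le> 1 / (real M + 1)" "1 / (real n + 1) \<le> 1 / (real M + 1)"
        using mn by (auto intro!: divide_left_mono)
      moreover have "2 / (real M + 1) = 1 / (real M + 1) + 1 / (real M + 1)" by simp
      ultimately have s: "1 / (real m + 1) + 1 / (real n + 1) \<le> 2 / (real M + 1)" by linarith
      have "(norm (X m - X n))\<^sup>2 \<le> 4 * (2 * R + 1) * (1 / (real m + 1) + 1 / (real n + 1))"
        by (rule dX)
      also have "\<dots> \<le> 4 * (2 * R + 1) * (2 / (real M + 1))"
        using R0 s by (intro mult_left_mono) auto
      also have "\<dots> = c / (real M + 1)" by (simp add: c_def)
      also have "\<dots> < e\<^sup>2"
      proof -
        have "c / e\<^sup>2 < real M + 1" using M by simp
        then have "c < (real M + 1) * e\<^sup>2" using e by (simp add: pos_divide_less_eq)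
        then show ?thesis by (simp add: pos_divide_less_eq mult.commute)
      qed
      finally have "(norm (X m - X n))\<^sup>2 < e\<^sup>2" .
      then show "dist (X m) (X n) < e" using e by (simp add: dist_norm power_less_imp_less_base)
    qed
  qed
  then obtain L where L: "X \<longlonglongrightarrow> L" using Cauchy_convergent_iff convergent_def by blast
  have LK: "L \<in> K" using closed_sequentially[OF K(1)] X(1) L by blast
  have "f L \<le> R"
  proof (rule ccontr)
    assume "\<not> f L \<le> R"
    then have eps: "f L - R > 0" by simp
    define \<epsilon> where "\<epsilon> = f L - R"
    have "\<forall>\<^sub>F n in sequentially. dist (X n) L < \<epsilon> / 2"
      using L eps unfolding tendsto_iff \<epsilon>_def[symmetric] by (metis half_gt_zero)
    then obtain M1 where M1: "\<And>n. n \<ge> M1 \<Longrightarrow> dist (X n) L < \<epsilon> / 2"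
      unfolding eventually_sequentially by blast
    obtain M2 :: nat where M2: "2 / \<epsilon> < real M2" using reals_Archimedean2 by blast
    define n where "n = max M1 M2"
    have "1 / (real n + 1) < \<epsilon> / 2"
    proof -
      have "2 / \<epsilon> < real n + 1" using M2 unfolding n_def by simp
      then have "2 < (real n + 1) * \<epsilon>" using eps unfolding \<epsilon>_def by (simp add: pos_divide_less_eq)
      then show ?thesis by (simp add: pos_divide_less_eq mult.commute)
    qed
    moreover have "dist L (X n) < \<epsilon> / 2" using M1[of n] by (simp add: n_def dist_commute)
    moreover have "f L \<le> f (X n) + dist L (X n)" by (rule lip)
    ultimately show False using X(2)[of n] unfolding \<epsilon>_def by argo
  qed
  then show ?thesis using LK Rle by force
qed

lemma min_unique:
  fixes f :: "'v::{real_inner} \<Rightarrow> real" and K :: "'v set"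
  assumes K: "\<And>x y. x \<in> K \<Longrightarrow> y \<in> K \<Longrightarrow> (1/2) *\<^sub>R (x + y) \<in> K"
    and nn: "\<And>x. f x \<ge> 0"
    and uc: "\<And>x y. x \<in> K \<Longrightarrow> y \<in> K \<Longrightarrow>
        (f ((1/2) *\<^sub>R (x + y)))\<^sup>2 \<le> (f x)\<^sup>2 / 2 + (f y)\<^sup>2 / 2 - (norm (x - y))\<^sup>2 / 4"
    and x: "x \<in> K" "\<forall>z\<in>K. f x \<le> f z" and y: "y \<in> K" "\<forall>z\<in>K. f y \<le> f z"
  shows "x = y"
proof -
  have e: "f x = f y" using x y by force
  have "f x \<le> f ((1/2) *\<^sub>R (x + y))" using x y K by blast
  then have "(f x)\<^sup>2 \<le> (f ((1/2) *\<^sub>R (x + y)))\<^sup>2" using nn by (intro power_mono) auto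
  also have "\<dots> \<le> (f x)\<^sup>2 / 2 + (f y)\<^sup>2 / 2 - (norm (x - y))\<^sup>2 / 4" using uc x y by blast
  finally have "(norm (x - y))\<^sup>2 \<le> 0" using e by simp
  then show ?thesis by simp
qed

lemma isometry_continuous:
  assumes "\<And>x y. dist (T x) (T y) = dist x y"
  shows "continuous_on UNIV T"
  unfolding continuous_on_iff using assms by metis

lemma trivialize_action:
  fixes A :: "'g::{topological_space, group_add} \<Rightarrow> 'v::{real_inner, complete_space} \<Rightarrow> 'v"
    and N :: "'g set"
  assumes act: "affine_isometric_action A"
    and N: "compact N" "0 \<in> N" "\<And>a b. a \<in> N \<Longrightarrow> b \<in> N \<Longrightarrow> a + b \<in> N"
       "\<And>a. a \<in> N \<Longrightarrow> - a \<in> N" "\<And>g n. n \<in> N \<Longrightarrow> - g + n + g \<in> N"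
  shows "\<exists>B p. affine_isometric_action B \<and> (\<forall>n\<in>N. B n = id) \<and> (\<forall>g. B g 0 = A g p - p)"
proof -
  have Aadd: "A (g + h) x = A g (A h x)" for g h x
    using act unfolding affine_isometric_action_def by (metis comp_apply)
  have A0: "A 0 x = x" for x using act unfolding affine_isometric_action_def by simp
  have Aiso: "dist (A g x) (A g y) = dist x y" for g x y
    using act unfolding affine_isometric_action_def by blast
  have Acont: "continuous_on UNIV (\<lambda>g. A g x)" for x
    using act unfolding affine_isometric_action_def by blast
  have "compact ((\<lambda>n. A n 0) ` N)"
    using N(1) Acont by (intro compact_continuous_image) (auto intro: continuous_on_subset)
  then obtain Bd where Bd: "\<And>n. n \<in> N \<Longrightarrow> norm (A n 0) \<le> Bd"
    using compact_imp_bounded bounded_iff by (metis imageI)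
  define f where "f x = (SUP n\<in>N. dist x (A n 0))" for x
  have bdd: "bdd_above ((\<lambda>n. dist x (A n 0)) ` N)" for x
  proof (rule bdd_aboveI2)
    fix n assume "n \<in> N"
    have "dist x (A n 0) \<le> norm x + norm (A n 0)" by (simp add: dist_norm norm_triangle_ineq4)
    then show "dist x (A n 0) \<le> norm x + Bd" using Bd[OF \<open>n \<in> N\<close>] by simp
  qed
  have fup: "dist x (A n 0) \<le> f x" if "n \<in> N" for x n
    unfolding f_def using that bdd by (intro cSUP_upper)
  have fle: "f x \<le> M" if "\<And>n. n \<in> N \<Longrightarrow> dist x (A n 0) \<le> M" for x M
    unfolding f_def using that N(2) by (intro cSUP_least) auto
  have fnn: "f x \<ge> 0" for x using fup[OF N(2), of x] by (meson order_trans zero_le_dist)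
  have flip: "f x \<le> f y + dist x y" for x y
  proof (rule fle)
    fix n assume n: "n \<in> N"
    have "dist x (A n 0) \<le> dist x y + dist y (A n 0)" by (rule dist_triangle)
    then show "dist x (A n 0) \<le> f y + dist x y" using fup[OF n, of y] by simp
  qed
  have fuc: "(f ((1/2) *\<^sub>R (x + y)))\<^sup>2 \<le> (f x)\<^sup>2 / 2 + (f y)\<^sup>2 / 2 - (norm (x - y))\<^sup>2 / 4" for x y
  proof -
    define Q where "Q = (f x)\<^sup>2 / 2 + (f y)\<^sup>2 / 2 - (norm (x - y))\<^sup>2 / 4"
    have dq: "(dist ((1/2) *\<^sub>R (x + y)) (A n 0))\<^sup>2 \<le> Q" if n: "n \<in> N" for n
    proof -
      have "(dist x (A n 0))\<^sup>2 \<le> (f x)\<^sup>2" using fup[OF n, of x] by (intro power_mono) auto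
      moreover have "(dist y (A n 0))\<^sup>2 \<le> (f y)\<^sup>2" using fup[OF n, of y] by (intro power_mono) auto
      ultimately show ?thesis unfolding Q_def parallelogram_mid by simp
    qed
    have Q0: "Q \<ge> 0" using dq[OF N(2)] by (meson order_trans zero_le_power2)
    have "f ((1/2) *\<^sub>R (x + y)) \<le> sqrt Q"
      by (rule fle) (use dq in \<open>auto intro: real_le_rsqrt\<close>)
    then have "(f ((1/2) *\<^sub>R (x + y)))\<^sup>2 \<le> (sqrt Q)\<^sup>2" using fnn by (intro power_mono) auto
    then show ?thesis using Q0 unfolding Q_def by simp
  qed
  obtain c where c: "\<forall>y. f c \<le> f y"
    using min_exists[of UNIV f] fnn flip fuc by auto
  have cfix: "A n c = c" if n: "n \<in> N" for n
  proof -
    have "f (A n c) \<le> f c"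
    proof (rule fle)
      fix m assume m: "m \<in> N"
      have "A m 0 = A n (A (- n + m) 0)" by (simp add: Aadd[symmetric] add.assoc[symmetric])
      then have "dist (A n c) (A m 0) = dist c (A (- n + m) 0)" by (simp add: Aiso)
      also have "\<dots> \<le> f c" using N(3,4) n m by (intro fup) auto
      finally show "dist (A n c) (A m 0) \<le> f c" .
    qed
    then have "\<forall>y. f (A n c) \<le> f y" using c by (meson order_trans)
    then show ?thesis
      using min_unique[of UNIV f "A n c" c] fnn fuc c by auto
  qed
  define F where "F = {x. \<forall>n\<in>N. A n x = x}"
  have cF: "c \<in> F" using cfix by (simp add: F_def)
  have Fclosed: "closed F"
  proof -
    have "F = (\<Inter>n\<in>N. {x. A n x = x})" by (auto simp: F_def)
    moreover have "closed {x. A n x = x}" for n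
      by (intro closed_Collect_eq isometry_continuous Aiso continuous_on_id)
    ultimately show ?thesis by auto
  qed
  have Faff: "(1 - t) *\<^sub>R u + t *\<^sub>R w \<in> F" if "u \<in> F" "w \<in> F" for u w t
    using that unfolding F_def by (auto simp: isometry_affine[OF Aiso])
  have Fmid: "(1/2) *\<^sub>R (u + w) \<in> F" if "u \<in> F" "w \<in> F" for u w
    using Faff[OF that, of "1/2"] by (simp add: scaleR_add_right)
  have Finv: "A g u \<in> F" if "u \<in> F" for g u
    unfolding F_def
  proof (intro CollectI ballI)
    fix n assume n: "n \<in> N"
    have e: "g + (- g + n + g) = n + g" by (simp add: add.assoc[symmetric])
    have "A n (A g u) = A g (A (- g + n + g) u)" by (simp only: Aadd[symmetric] e)
    also have "A (- g + n + g) u = u" using that N(5)[OF n] unfolding F_def by blast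
    finally show "A n (A g u) = A g u" .
  qed
  have Pex: "\<exists>u\<in>F. \<forall>w\<in>F. dist z u \<le> dist z w" for z
    by (rule min_exists[of F "\<lambda>u. dist z u"])
      (use Fclosed cF Fmid in \<open>auto simp: parallelogram_mid dist_commute[of z] intro: dist_triangle3
         simp del: dist_commute_lessI, metis add.commute dist_triangle\<close>)
  define P where "P z = (SOME u. u \<in> F \<and> (\<forall>w\<in>F. dist z u \<le> dist z w))" for z
  have PF: "P z \<in> F" and Pmin: "\<And>w. w \<in> F \<Longrightarrow> dist z (P z) \<le> dist z w" for z
    using someI_ex[OF Pex[of z, unfolded Bex_def]] unfolding P_def by blast+
  have orth1: "inner (z - P z) (u - P z) = 0" if u: "u \<in> F" for z u
  proof (rule ccontr)
    define a where "a = inner (z - P z) (u - P z)"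
    define b where "b = inner (u - P z) (u - P z)"
    assume "a \<noteq> 0"
    have b0: "b \<ge> 0" unfolding b_def by simp
    define t where "t = a / (b + 1)"
    have "(1 - t) *\<^sub>R P z + t *\<^sub>R u \<in> F" by (rule Faff[OF PF u])
    from Pmin[OF this] have "(dist z (P z))\<^sup>2 \<le> (dist z ((1 - t) *\<^sub>R P z + t *\<^sub>R u))\<^sup>2"
      by (intro power_mono) auto
    moreover have "z - ((1 - t) *\<^sub>R P z + t *\<^sub>R u) = (z - P z) - t *\<^sub>R (u - P z)"
      by (simp add: algebra_simps)
    ultimately have "inner (z - P z) (z - P z) \<le> inner ((z - P z) - t *\<^sub>R (u - P z)) ((z - P z) - t *\<^sub>R (u - P z))"
      by (simp add: dist_norm power2_norm_eq_inner)
    then have "0 \<le> t * t * b - 2 * t * a"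
      unfolding a_def b_def by (simp add: inner_simps inner_commute algebra_simps)
    moreover have "a = t * (b + 1)" unfolding t_def using b0 by simp
    ultimately have "0 \<le> - (t * t) * (b + 2)" by (simp add: algebra_simps)
    moreover have "t \<noteq> 0" unfolding t_def using \<open>a \<noteq> 0\<close> b0 by simp
    then have "t * t > 0" by (simp add: zero_less_mult_iff) linarith
    moreover have "- (t * t) * (b + 2) = - (t * t * (b + 2))" by simp
    ultimately show False using b0 mult_pos_pos[of "t * t" "b + 2"] by linarith
  qed
  have orth: "inner (z - P z) (u - w) = 0" if "u \<in> F" "w \<in> F" for z u w
  proof -
    have "u - w = (u - P z) - (w - P z)" by simp
    then show ?thesis using orth1[OF that(1), of z] orth1[OF that(2), of z] by (simp add: inner_diff_right)
  qed
  have Pchar: "P (u + v) = u" if u: "u \<in> F" and v: "\<And>x y. x \<in> F \<Longrightarrow> y \<in> F \<Longrightarrow> inner v (x - y) = 0" for u v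
  proof -
    have d2: "(dist (u + v) x)\<^sup>2 = (norm v)\<^sup>2 + (norm (u - x))\<^sup>2" if "x \<in> F" for x
    proof -
      have "dist (u + v) x = norm (v + (u - x))" by (simp add: dist_norm algebra_simps)
      moreover have "inner v (u - x) = 0" using v[OF u that] .
      ultimately show ?thesis by (simp add: norm_add_orth)
    qed
    have "(dist (u + v) (P (u + v)))\<^sup>2 \<le> (dist (u + v) u)\<^sup>2"
      using Pmin[OF u] by (intro power_mono) auto
    then have "(norm (u - P (u + v)))\<^sup>2 \<le> 0" using d2[OF PF] d2[OF u] by simp
    then show ?thesis by simp
  qed
  define B where "B g x = A g (P x) + (x - P x)" for g x
  have Bid: "B n = id" if "n \<in> N" for n
    using PF that by (auto simp: B_def F_def)
  have B0: "B 0 = id" by (auto simp: B_def A0)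
  have Badd: "B (g + h) = B g \<circ> B h" for g h
  proof
    fix x
    have "P (A h (P x) + (x - P x)) = A h (P x)"
      by (rule Pchar) (use Finv PF orth in auto)
    then show "B (g + h) x = (B g \<circ> B h) x" by (simp add: B_def Aadd)
  qed
  have Biso: "dist (B g x) (B g y) = dist x y" for g x y
  proof -
    have o1: "inner (A g (P x) - A g (P y)) ((x - P x) - (y - P y)) = 0"
      using orth[OF Finv[OF PF] Finv[OF PF], of x g x g y] orth[OF Finv[OF PF] Finv[OF PF], of y g x g y]
      by (simp add: inner_diff_right inner_commute)
    have o2: "inner (P x - P y) ((x - P x) - (y - P y)) = 0"
      using orth[OF PF PF, of x x y] orth[OF PF PF, of y x y]
      by (simp add: inner_diff_right inner_commute)
    have "(dist (B g x) (B g y))\<^sup>2 = (norm ((A g (P x) - A g (P y)) + ((x - P x) - (y - P y))))\<^sup>2"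
      by (simp add: B_def dist_norm algebra_simps)
    also have "\<dots> = (norm (A g (P x) - A g (P y)))\<^sup>2 + (norm ((x - P x) - (y - P y)))\<^sup>2"
      by (rule norm_add_orth[OF o1])
    also have "norm (A g (P x) - A g (P y)) = norm (P x - P y)"
      using Aiso by (simp add: dist_norm)
    also have "(norm (P x - P y))\<^sup>2 + (norm ((x - P x) - (y - P y)))\<^sup>2 = (norm ((P x - P y) + ((x - P x) - (y - P y))))\<^sup>2"
      by (rule norm_add_orth[OF o2, symmetric])
    also have "(P x - P y) + ((x - P x) - (y - P y)) = x - y" by simp
    finally have "(dist (B g x) (B g y))\<^sup>2 = (dist x y)\<^sup>2" by (simp add: dist_norm)
    then show ?thesis by (simp add: power2_eq_iff_nonneg)
  qed
  have Bcont: "continuous_on UNIV (\<lambda>g. B g x)" for x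
    unfolding B_def by (intro continuous_intros Acont)
  have "affine_isometric_action B"
    unfolding affine_isometric_action_def using Badd B0 Biso Bcont by blast
  moreover have "B g 0 = A g (P 0) - P 0" for g by (simp add: B_def)
  ultimately show ?thesis using Bid by blast
qed

lemma powr_bound:
  fixes d e K r :: real
  assumes "0 \<le> e" "0 \<le> K" "0 \<le> d" "d \<le> e + K" "0 \<le> r" "r \<le> 1"
  shows "d powr r \<le> 2 * (e powr r + K powr r)"
proof -
  have "d powr r \<le> (e + K) powr r" using assms by (intro powr_mono2) auto
  also have "\<dots> \<le> (2 * max e K) powr r" using assms by (intro powr_mono2) auto
  also have "\<dots> = 2 powr r * max e K powr r" using assms by (simp add: powr_mult)
  also have "\<dots> \<le> 2 * max e K powr r"
  proof (rule mult_right_mono)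
    show "2 powr r \<le> 2" using powr_mono[of r 1 2] assms by simp
  qed simp
  also have "max e K powr r \<le> e powr r + K powr r"
    by (cases "e \<le> K") (auto simp: max_def)
  then have "2 * max e K powr r \<le> 2 * (e powr r + K powr r)" by simp
  finally show ?thesis .
qed

lemma quotient_metric_attained:
  fixes S :: "'g::group_add set" and q :: "'g \<Rightarrow> 'h::group_add"
  assumes "surj q"
  shows "\<exists>g. q g = - x + y \<and> quotient_metric (word_length S) q x y = word_length S g"
proof -
  define z where "z = - x + y"
  have ex: "\<exists>m g. q g = z \<and> wl S g = m" using assms by (metis surjD)
  define m where "m = (LEAST m. \<exists>g. q g = z \<and> wl S g = m)"
  obtain g where g: "q g = z" "wl S g = m" using LeastI_ex[OF ex] unfolding m_def by blast
  have "Inf {word_length S g | g. q g = z} = real m"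
  proof (rule cInf_eq_minimum)
    show "real m \<in> {word_length S g | g. q g = z}" using g by (auto simp: word_length_wl)
    fix t assume "t \<in> {word_length S g | g. q g = z}"
    then obtain h where "q h = z" "t = real (wl S h)" by (auto simp: word_length_wl)
    then show "real m \<le> t" unfolding m_def by (auto intro: Least_le)
  qed
  then show ?thesis using g unfolding quotient_metric_def z_def by (auto simp: word_length_wl)
qed

lemma norm3: "norm (u + v + w) \<le> norm u + norm v + norm (w :: 'a::real_normed_vector)"
  by (rule order_trans[OF norm_triangle_ineq]) (simp add: norm_triangle_ineq)

theorem lemma4p2:
  fixes S N :: "'g::{topological_group_add, t2_space} set"
    and q :: "'g \<Rightarrow> 'h::topological_group_add"
  assumes "locally_compact_space (euclidean :: 'g topology)"
    and "compact S" and "generating_set S"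
    and "compact N"
    and "\<And>a b. q (a + b) = q a + q b"
    and "continuous_on UNIV q" and "surj q"
    and "\<And>U. open U \<Longrightarrow> open (q ` U)"
    and "{g. q g = 0} = N"
  shows "equivariant_compression (quotient_metric (word_length S) q) TYPE('v::{real_inner, complete_space})
       = equivariant_compression (word_metric S) TYPE('v)"
proof -
  note lc = assms(1) and Sc = assms(2) and gen = assms(3) and Nc = assms(4) and qadd = assms(5)
    and qcont = assms(6) and qsurj = assms(7) and qopen = assms(8) and Ndef = assms(9)
  define dq where "dq = quotient_metric (word_length S) q"
  define d where "d = word_metric S"
  have q0: "q 0 = 0"
  proof -
    have "q 0 + q 0 = q 0 + 0" using qadd[of 0 0] by simp
    then show ?thesis by (rule add_left_imp_eq)
  qed
  have qneg: "q (- a) = - q a" for a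
  proof -
    have "q a + q (- a) = 0" using qadd[of a "- a"] q0 by simp
    from minus_unique[OF this] show ?thesis by simp
  qed
  have N0: "0 \<in> N" using Ndef q0 by blast
  have Nadd: "a + b \<in> N" if "a \<in> N" "b \<in> N" for a b using that Ndef[symmetric] qadd by auto
  have Nneg: "- a \<in> N" if "a \<in> N" for a using that Ndef[symmetric] qneg by auto
  have Nnorm: "- g + n + g \<in> N" if "n \<in> N" for g n using that Ndef[symmetric] qadd qneg by auto
  obtain K where K: "\<And>n. n \<in> N \<Longrightarrow> wl S n \<le> K"
    using wl_bounded_compact[OF lc Sc gen Nc] by blast
  have d_nn: "d a b \<ge> 0" for a b by (simp add: d_def word_metric_def word_length_wl)
  have dq_nn: "dq x y \<ge> 0" for x y
    using quotient_metric_attained[OF qsurj, where S=S and x=x and y=y] by (auto simp: dq_def word_length_wl)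
  have dq_le: "dq (q a) (q b) \<le> d a b" for a b
  proof -
    have "q (- a + b) = - q a + q b" by (simp add: qadd qneg)
    then have mem: "word_length S (- a + b) \<in> {word_length S g | g. q g = - q a + q b}" by blast
    have bdd: "bdd_below {word_length S g | g. q g = - q a + q b}"
      by (rule bdd_belowI[of _ 0]) (auto simp: word_length_wl)
    show ?thesis unfolding dq_def d_def quotient_metric_def word_metric_def
      using cInf_lower[OF mem bdd] .
  qed
  have d_le: "d a b \<le> dq (q a) (q b) + real K" for a b
  proof -
    obtain g where g: "q g = - q a + q b" "dq (q a) (q b) = word_length S g"
      using quotient_metric_attained[OF qsurj, where S=S and x="q a" and y="q b"] by (auto simp: dq_def)
    define n where "n = - g + (- a + b)"
    have "q n = 0" using g unfolding n_def by (simp add: qadd qneg)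
    then have nN: "n \<in> N" using Ndef by blast
    have "- a + b = g + n" unfolding n_def by (rule add_minus_cancel[symmetric])
    then have "wl S (- a + b) \<le> wl S g + wl S n" using wl_add[OF gen] by metis
    also have "\<dots> \<le> wl S g + K" using K[OF nN] by simp
    finally show ?thesis using g unfolding d_def word_metric_def by (simp add: word_length_wl)
  qed
  have dir1: "\<exists>A :: 'g \<Rightarrow> 'v \<Rightarrow> 'v. affine_isometric_action A \<and> (\<exists>C>0. \<exists>D>0. \<forall>g h.
               d g h powr r / C - D \<le> norm (A g 0 - A h 0) \<and> norm (A g 0 - A h 0) \<le> C * d g h)"
    if r: "0 \<le> r" "r \<le> 1" and ex: "\<exists>A :: 'h \<Rightarrow> 'v \<Rightarrow> 'v. affine_isometric_action A \<and> (\<exists>C>0. \<exists>D>0. \<forall>g h.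
               dq g h powr r / C - D \<le> norm (A g 0 - A h 0) \<and> norm (A g 0 - A h 0) \<le> C * dq g h)" for r
  proof -
    obtain A :: "'h \<Rightarrow> 'v \<Rightarrow> 'v" and C D where act: "affine_isometric_action A" and CD: "C > 0" "D > 0"
      and bnd: "\<And>x y. dq x y powr r / C - D \<le> norm (A x 0 - A y 0) \<and> norm (A x 0 - A y 0) \<le> C * dq x y"
      using ex by blast
    define A2 where "A2 g = A (q g)" for g
    have "affine_isometric_action A2"
      using act unfolding affine_isometric_action_def A2_def
    proof (intro conjI allI)
      fix x
      assume "(\<forall>g h. A (g + h) = A g \<circ> A h) \<and> A 0 = id \<and> (\<forall>g x y. dist (A g x) (A g y) = dist x y) \<and>
        (\<forall>x. continuous_on UNIV (\<lambda>g. A g x))"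
      then show "continuous_on UNIV (\<lambda>g. A (q g) x)"
        using continuous_on_compose2[OF _ qcont] by blast
    qed (auto simp: qadd q0)
    moreover have "\<forall>g h. d g h powr r / (2 * C) - (D + real K powr r / C) \<le> norm (A2 g 0 - A2 h 0) \<and>
        norm (A2 g 0 - A2 h 0) \<le> (2 * C) * d g h"
    proof (intro allI conjI)
      fix g h
      have "norm (A2 g 0 - A2 h 0) \<le> C * dq (q g) (q h)" using bnd unfolding A2_def by blast
      also have "\<dots> \<le> C * d g h" using dq_le CD by (intro mult_left_mono) auto
      also have "\<dots> \<le> (2 * C) * d g h" using CD d_nn[of g h] by (intro mult_right_mono) auto
      finally show "norm (A2 g 0 - A2 h 0) \<le> (2 * C) * d g h" .
      have "d g h powr r \<le> 2 * (dq (q g) (q h) powr r + real K powr r)"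
        using powr_bound[OF dq_nn _ d_nn d_le r] by simp
      then have "d g h powr r / (2 * C) \<le> dq (q g) (q h) powr r / C + real K powr r / C"
        using CD by (simp add: divide_simps)
      then show "d g h powr r / (2 * C) - (D + real K powr r / C) \<le> norm (A2 g 0 - A2 h 0)"
        using bnd[of "q g" "q h"] unfolding A2_def by linarith
    qed
    moreover have "2 * C > 0" "D + real K powr r / C > 0" using CD by (auto intro!: add_pos_nonneg divide_nonneg_pos)
    ultimately show ?thesis by blast
  qed
  have dir2: "\<exists>A :: 'h \<Rightarrow> 'v \<Rightarrow> 'v. affine_isometric_action A \<and> (\<exists>C>0. \<exists>D>0. \<forall>g h.
               dq g h powr r / C - D \<le> norm (A g 0 - A h 0) \<and> norm (A g 0 - A h 0) \<le> C * dq g h)"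
    if r: "0 \<le> r" "r \<le> 1" and ex: "\<exists>A :: 'g \<Rightarrow> 'v \<Rightarrow> 'v. affine_isometric_action A \<and> (\<exists>C>0. \<exists>D>0. \<forall>g h.
               d g h powr r / C - D \<le> norm (A g 0 - A h 0) \<and> norm (A g 0 - A h 0) \<le> C * d g h)" for r
  proof -
    obtain A :: "'g \<Rightarrow> 'v \<Rightarrow> 'v" and C D where act: "affine_isometric_action A" and CD: "C > 0" "D > 0"
      and bnd: "\<And>x y. d x y powr r / C - D \<le> norm (A x 0 - A y 0) \<and> norm (A x 0 - A y 0) \<le> C * d x y"
      using ex by blast
    obtain B p where actB: "affine_isometric_action B" and BN: "\<forall>n\<in>N. B n = id"
      and Bp: "\<forall>g. B g 0 = A g p - p"
      using trivialize_action[OF act Nc N0 Nadd Nneg Nnorm] by blast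
    have Badd: "B (g + h) = B g \<circ> B h" for g h using actB unfolding affine_isometric_action_def by blast
    have B0: "B 0 = id" using actB unfolding affine_isometric_action_def by blast
    have Biso: "dist (B g x) (B g y) = dist x y" for g x y
      using actB unfolding affine_isometric_action_def by blast
    have Bcont: "continuous_on UNIV (\<lambda>g. B g x)" for x
      using actB unfolding affine_isometric_action_def by blast
    have Aiso: "dist (A g x) (A g y) = dist x y" for g x y
      using act unfolding affine_isometric_action_def by blast
    have Bfib: "B a = B b" if "q a = q b" for a b
    proof -
      have "q (- a + b) = 0" using that by (simp add: qadd qneg)
      then have "- a + b \<in> N" using Ndef by blast
      then have "B (a + (- a + b)) = B a" using BN Badd[of a "- a + b"] by simp
      then show ?thesis by (simp add: add.assoc[symmetric])
    qed
    define A2 where "A2 y = B (inv q y)" for y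
    have A2q: "A2 (q a) = B a" for a
      unfolding A2_def by (rule Bfib) (simp add: surj_f_inv_f[OF qsurj])
    have invq: "q (inv q y) = y" for y by (simp add: surj_f_inv_f[OF qsurj])
    have "affine_isometric_action A2"
      unfolding affine_isometric_action_def
    proof (intro conjI allI)
      fix x y
      have "A2 (x + y) = A2 (q (inv q x + inv q y))" by (simp add: qadd invq)
      also have "\<dots> = B (inv q x + inv q y)" by (rule A2q)
      also have "\<dots> = A2 x \<circ> A2 y" by (simp add: Badd A2_def)
      finally show "A2 (x + y) = A2 x \<circ> A2 y" .
    next
      show "A2 0 = id" using A2q[of 0] q0 B0 by simp
    next
      fix g x y show "dist (A2 g x) (A2 g y) = dist x y" by (simp add: A2_def Biso)
    next
      fix x
      show "continuous_on UNIV (\<lambda>y. A2 y x)"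
        unfolding continuous_on_open_invariant
      proof (intro allI impI)
        fix W :: "'v set" assume W: "open W"
        have "open ((\<lambda>g. B g x) -` W)" by (rule open_vimage[OF W Bcont])
        then have "open (q ` ((\<lambda>g. B g x) -` W))" by (rule qopen)
        moreover have "q ` ((\<lambda>g. B g x) -` W) = (\<lambda>y. A2 y x) -` W"
        proof
          show "q ` (\<lambda>g. B g x) -` W \<subseteq> (\<lambda>y. A2 y x) -` W" by (auto simp: A2q)
          show "(\<lambda>y. A2 y x) -` W \<subseteq> q ` (\<lambda>g. B g x) -` W"
          proof
            fix y assume "y \<in> (\<lambda>y. A2 y x) -` W"
            then show "y \<in> q ` (\<lambda>g. B g x) -` W"
              by (intro image_eqI[of _ _ "inv q y"]) (auto simp: invq A2_def)
          qed
        qed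
        ultimately show "\<exists>U. open U \<and> U \<inter> UNIV = (\<lambda>y. A2 y x) -` W \<inter> UNIV" by auto
      qed
    qed
    define E where "E = 2 * norm p"
    have E0: "E \<ge> 0" by (simp add: E_def)
    have cmp: "\<bar>norm (B a 0 - B b 0) - norm (A a 0 - A b 0)\<bar> \<le> E" for a b
    proof -
      have 1: "norm (A a p - A a 0) = norm p" "norm (A b p - A b 0) = norm p"
        using Aiso[of a p 0] Aiso[of b p 0] by (simp_all add: dist_norm)
      have eq: "norm (B a 0 - B b 0) = norm (A a p - A b p)" using Bp by simp
      have "norm (A a p - A b p) \<le> norm (A a p - A a 0) + norm (A a 0 - A b 0) + norm (A b 0 - A b p)"
        using norm3[of "A a p - A a 0" "A a 0 - A b 0" "A b 0 - A b p"] by simp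
      moreover have "norm (A a 0 - A b 0) \<le> norm (A a 0 - A a p) + norm (A a p - A b p) + norm (A b p - A b 0)"
        using norm3[of "A a 0 - A a p" "A a p - A b p" "A b p - A b 0"] by simp
      moreover have "norm (A a 0 - A a p) = norm p" "norm (A b 0 - A b p) = norm p"
        using 1 by (simp_all add: norm_minus_commute)
      ultimately show ?thesis using 1 unfolding eq E_def abs_le_iff by linarith
    qed
    have bnd2: "\<forall>x y. dq x y powr r / (C + E) - (D + E) \<le> norm (A2 x 0 - A2 y 0) \<and>
        norm (A2 x 0 - A2 y 0) \<le> (C + E) * dq x y"
    proof (intro allI conjI)
      fix x y
      have "dq x y powr r \<le> d (inv q x) (inv q y) powr r"
        using dq_le[of "inv q x" "inv q y"] dq_nn r by (intro powr_mono2) (auto simp: invq)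
      then have "dq x y powr r / C \<le> d (inv q x) (inv q y) powr r / C" using CD by (simp add: divide_right_mono)
      moreover have "dq x y powr r / (C + E) \<le> dq x y powr r / C"
        using CD E0 by (intro divide_left_mono) auto
      ultimately show "dq x y powr r / (C + E) - (D + E) \<le> norm (A2 x 0 - A2 y 0)"
        using bnd[of "inv q x" "inv q y"] cmp[of "inv q x" "inv q y"] unfolding A2_def by linarith
    next
      fix x y
      obtain g0 where g0: "q g0 = - x + y" "dq x y = word_length S g0"
        using quotient_metric_attained[OF qsurj, where S=S and x=x and y=y] by (auto simp: dq_def)
      define a where "a = inv q x"
      have qa: "q a = x" by (simp add: a_def invq)
      have qb: "q (a + g0) = y" using qa g0 by (simp add: qadd add.assoc[symmetric])
      show "norm (A2 x 0 - A2 y 0) \<le> (C + E) * dq x y"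
      proof (cases "g0 = 0")
        case True
        then show ?thesis using qa qb CD E0 dq_nn[of y y] by simp
      next
        case False
        then have l1: "dq x y \<ge> 1" using g0 wl_zero_iff[OF gen, of g0] by (simp add: word_length_wl)
        have "A2 x = B a" unfolding qa[symmetric] by (rule A2q)
        moreover have "A2 y = B (a + g0)" unfolding qb[symmetric] by (rule A2q)
        ultimately have "norm (A2 x 0 - A2 y 0) = norm (B a 0 - B (a + g0) 0)" by simp
        also have "\<dots> \<le> norm (A a 0 - A (a + g0) 0) + E" using cmp[of a "a + g0"] by linarith
        also have "\<dots> \<le> C * d a (a + g0) + E" using bnd[of a "a + g0"] by linarith
        also have "d a (a + g0) = dq x y" unfolding d_def word_metric_def minus_add_cancel using g0(2) by simp
        also have "C * dq x y + E \<le> (C + E) * dq x y" using mult_left_mono[OF l1 E0]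
          by (simp add: algebra_simps)
        finally show ?thesis .
      qed
    qed
    have pos: "C + E > 0" "D + E > 0" using CD E0 by auto
    show ?thesis
      using \<open>affine_isometric_action A2\<close> pos bnd2 by fast
  qed
  have "{r \<in> {0..1}. \<exists>A :: 'h \<Rightarrow> 'v \<Rightarrow> 'v. affine_isometric_action A \<and> (\<exists>C>0. \<exists>D>0. \<forall>g h.
               dq g h powr r / C - D \<le> norm (A g 0 - A h 0) \<and> norm (A g 0 - A h 0) \<le> C * dq g h)}
      = {r \<in> {0..1}. \<exists>A :: 'g \<Rightarrow> 'v \<Rightarrow> 'v. affine_isometric_action A \<and> (\<exists>C>0. \<exists>D>0. \<forall>g h.
               d g h powr r / C - D \<le> norm (A g 0 - A h 0) \<and> norm (A g 0 - A h 0) \<le> C * d g h)}"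
  proof (rule Collect_cong)
    fix r
    show "(r \<in> {0..1} \<and> (\<exists>A :: 'h \<Rightarrow> 'v \<Rightarrow> 'v. affine_isometric_action A \<and> (\<exists>C>0. \<exists>D>0. \<forall>g h.
               dq g h powr r / C - D \<le> norm (A g 0 - A h 0) \<and> norm (A g 0 - A h 0) \<le> C * dq g h))) =
          (r \<in> {0..1} \<and> (\<exists>A :: 'g \<Rightarrow> 'v \<Rightarrow> 'v. affine_isometric_action A \<and> (\<exists>C>0. \<exists>D>0. \<forall>g h.
               d g h powr r / C - D \<le> norm (A g 0 - A h 0) \<and> norm (A g 0 - A h 0) \<le> C * d g h)))"
    proof (intro iffI conjI)
      assume H: "r \<in> {0..1} \<and> (\<exists>A :: 'h \<Rightarrow> 'v \<Rightarrow> 'v. affine_isometric_action A \<and> (\<exists>C>0. \<exists>D>0. \<forall>g h.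
               dq g h powr r / C - D \<le> norm (A g 0 - A h 0) \<and> norm (A g 0 - A h 0) \<le> C * dq g h))"
      then show "r \<in> {0..1}" by (rule conjunct1)
      from H have r: "0 \<le> r" "r \<le> 1" by simp_all
      from H have ex: "\<exists>A :: 'h \<Rightarrow> 'v \<Rightarrow> 'v. affine_isometric_action A \<and> (\<exists>C>0. \<exists>D>0. \<forall>g h.
               dq g h powr r / C - D \<le> norm (A g 0 - A h 0) \<and> norm (A g 0 - A h 0) \<le> C * dq g h)"
        by (rule conjunct2)
      show "\<exists>A :: 'g \<Rightarrow> 'v \<Rightarrow> 'v. affine_isometric_action A \<and> (\<exists>C>0. \<exists>D>0. \<forall>g h.
               d g h powr r / C - D \<le> norm (A g 0 - A h 0) \<and> norm (A g 0 - A h 0) \<le> C * d g h)"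
        by (rule dir1[OF r ex])
    next
      assume H: "r \<in> {0..1} \<and> (\<exists>A :: 'g \<Rightarrow> 'v \<Rightarrow> 'v. affine_isometric_action A \<and> (\<exists>C>0. \<exists>D>0. \<forall>g h.
               d g h powr r / C - D \<le> norm (A g 0 - A h 0) \<and> norm (A g 0 - A h 0) \<le> C * d g h))"
      then show "r \<in> {0..1}" by (rule conjunct1)
      from H have r: "0 \<le> r" "r \<le> 1" by simp_all
      from H have ex: "\<exists>A :: 'g \<Rightarrow> 'v \<Rightarrow> 'v. affine_isometric_action A \<and> (\<exists>C>0. \<exists>D>0. \<forall>g h.
               d g h powr r / C - D \<le> norm (A g 0 - A h 0) \<and> norm (A g 0 - A h 0) \<le> C * d g h)"
        by (rule conjunct2)
      show "\<exists>A :: 'h \<Rightarrow> 'v \<Rightarrow> 'v. affine_isometric_action A \<and> (\<exists>C>0. \<exists>D>0. \<forall>g h.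
               dq g h powr r / C - D \<le> norm (A g 0 - A h 0) \<and> norm (A g 0 - A h 0) \<le> C * dq g h)"
        by (rule dir2[OF r ex])
    qed
  qed
  then show ?thesis unfolding equivariant_compression_def dq_def d_def by (rule arg_cong)
qed


end
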